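(* Let $\Omega$ be a metrizable separable space and $c$ a capacity on $\mathcal{L}$, extended to all real functions on $\Omega$. (i) For every open $V\subset\Omega$ there is an increasing sequence of non-negative continuous functions $h_n$ with $1_V=\lim_n h_n$ and $c(1_V)=\lim_n c(h_n)$. (ii) For every closed $F\subset\Omega$ there is a decreasing sequence of continuous functions $g_n\le1$ with $1_F=\lim_n g_n$ and $c(1_F)=\lim_n c(g_n)$.
   Context: $\mathcal{L}\subset\mathcal{C}_b(\Omega)$ is a linear subspace which is a vector lattice, contains the constants and generates the topology of $\Omega$. A capacity on $\mathcal{L}$ is a seminorm $c$ with $c(f)\le c(g)$ whenever $|f|\le|g|$, and $\inf_n c(f_n)=0$ for every sequence $f_n\in\mathcal{L}$ decreasing pointwise to $0$. It is extended to all real functions by $c(f)=\sup\{c(\varphi):\varphi\in\mathcal{L},0\le\varphi\le f\}$ for $f\ge0$ lower semicontinuous and $c(g)=\inf\{c(f):f\text{ l.s.c.},f\ge|g|\}$ for arbitrary $g$. *)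

theory Defs
  imports "HOL-Analysis.Analysis"
begin

definition admissible_space :: "('a::topological_space \<Rightarrow> real) set \<Rightarrow> bool" where
  "admissible_space L \<longleftrightarrow>
     (\<forall>f\<in>L. continuous_on UNIV f \<and> bounded (range f)) \<and>
     (\<forall>f\<in>L. \<forall>g\<in>L. (\<lambda>x. f x + g x) \<in> L) \<and>
     (\<forall>f\<in>L. \<forall>a::real. (\<lambda>x. a * f x) \<in> L) \<and>
     (\<forall>f\<in>L. \<forall>g\<in>L. (\<lambda>x. max (f x) (g x)) \<in> L \<and> (\<lambda>x. min (f x) (g x)) \<in> L) \<and>
     (\<forall>a::real. (\<lambda>_. a) \<in> L) \<and>
     (\<forall>S. open S \<longleftrightarrow>
        openin (topology_generated_by {f -` U | f U. f \<in> L \<and> open U}) S)"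

definition capacity :: "('a \<Rightarrow> real) set \<Rightarrow> (('a \<Rightarrow> real) \<Rightarrow> real) \<Rightarrow> bool" where
  "capacity L c \<longleftrightarrow>
     (\<forall>f\<in>L. \<forall>g\<in>L. c (\<lambda>x. f x + g x) \<le> c f + c g) \<and>
     (\<forall>f\<in>L. \<forall>a::real. c (\<lambda>x. a * f x) = \<bar>a\<bar> * c f) \<and>
     (\<forall>f\<in>L. \<forall>g\<in>L. (\<forall>x. \<bar>f x\<bar> \<le> \<bar>g x\<bar>) \<longrightarrow> c f \<le> c g) \<and>
     (\<forall>F::nat \<Rightarrow> 'a \<Rightarrow> real. (\<forall>n. F n \<in> L) \<and> (\<forall>n x. F (Suc n) x \<le> F n x) \<and>
          (\<forall>x. (\<lambda>n. F n x) \<longlonglongrightarrow> 0) \<longrightarrow> (INF n. c (F n)) = 0)"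

definition lsc :: "('a::topological_space \<Rightarrow> real) \<Rightarrow> bool" where
  "lsc f \<longleftrightarrow> (\<forall>a. open {x. a < f x})"

definition cap_lsc :: "('a \<Rightarrow> real) set \<Rightarrow> (('a \<Rightarrow> real) \<Rightarrow> real) \<Rightarrow> ('a \<Rightarrow> real) \<Rightarrow> ereal" where
  "cap_lsc L c f = (SUP \<phi> \<in> {\<phi>\<in>L. \<forall>x. 0 \<le> \<phi> x \<and> \<phi> x \<le> f x}. ereal (c \<phi>))"

definition cap_ext :: "('a::topological_space \<Rightarrow> real) set \<Rightarrow> (('a \<Rightarrow> real) \<Rightarrow> real) \<Rightarrow> ('a \<Rightarrow> real) \<Rightarrow> ereal" where
  "cap_ext L c g = (INF f \<in> {f. lsc f \<and> (\<forall>x. 0 \<le> f x) \<and> (\<forall>x. \<bar>g x\<bar> \<le> f x)}. cap_lsc L c f)"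

end

theory Submission imports Defs begin

lemma (in Metric_space) sep_imp_sc:
  assumes "separable_space mtopology" shows "second_countable mtopology"
proof -
  obtain C where C: "countable C" "C \<subseteq> M" "mtopology closure_of C = M"
    using assms unfolding separable_space_def by auto
  define B where "B = (\<lambda>(c,n::nat). mball c (inverse (real (Suc n)))) ` (C \<times> UNIV)"
  have "countable B" unfolding B_def using C(1) by auto
  moreover have "\<forall>V\<in>B. openin mtopology V" unfolding B_def by auto
  moreover have "\<exists>V\<in>B. x \<in> V \<and> V \<subseteq> U" if U: "openin mtopology U" "x \<in> U" for U x
  proof -
    obtain r where r: "r > 0" "mball x r \<subseteq> U" using U openin_mtopology by blast
    have xM: "x \<in> M" using U openin_mtopology by blast
    obtain n where n: "inverse (real (Suc n)) < r/2"
      using r(1) reals_Archimedean[of "r/2"] by auto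
    have "\<forall>r>0. \<exists>y\<in>C. y \<in> mball x r" using C(3) xM metric_closure_of by blast
    then obtain c where c: "c \<in> C" "c \<in> mball x (inverse (real (Suc n)))"
      by (meson inverse_positive_iff_positive of_nat_0_less_iff zero_less_Suc)
    have "mball c (inverse (real (Suc n))) \<subseteq> mball x r"
    proof
      fix y assume "y \<in> mball c (inverse (real (Suc n)))"
      then have "y \<in> M" "d c y < inverse (real (Suc n))" by auto
      moreover have "d x c < inverse (real (Suc n))" using c by auto
      moreover have "d x y \<le> d x c + d c y" using triangle xM \<open>y \<in> M\<close> C(2) c(1) by blast
      ultimately show "y \<in> mball x r" using n xM by auto
    qed
    moreover have "x \<in> mball c (inverse (real (Suc n)))" using c commute by auto
    moreover have "mball c (inverse (real (Suc n))) \<in> B" unfolding B_def using c(1) by auto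
    ultimately show ?thesis using r(2) by blast
  qed
  ultimately show ?thesis unfolding second_countable_def by blast
qed

lemma sep_metr_sc:
  assumes "metrizable_space X" "separable_space X" shows "second_countable X"
  using assms Metric_space.sep_imp_sc unfolding metrizable_space_def by metis

context
  fixes L :: "('a::topological_space \<Rightarrow> real) set"
  assumes adm: "admissible_space L"
begin

lemma adm_c1: "\<forall>f\<in>L. continuous_on UNIV f \<and> bounded (range f)"
  using adm unfolding admissible_space_def by (elim conjE) assumption
lemma adm_c2: "\<forall>f\<in>L. \<forall>g\<in>L. (\<lambda>x. f x + g x) \<in> L"
  using adm unfolding admissible_space_def by (elim conjE) assumption
lemma adm_c3: "\<forall>f\<in>L. \<forall>a::real. (\<lambda>x. a * f x) \<in> L"
  using adm unfolding admissible_space_def by (elim conjE) assumption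
lemma adm_c4: "\<forall>f\<in>L. \<forall>g\<in>L. (\<lambda>x. max (f x) (g x)) \<in> L \<and> (\<lambda>x. min (f x) (g x)) \<in> L"
  using adm unfolding admissible_space_def by (elim conjE) assumption
lemma adm_c5: "\<forall>a::real. (\<lambda>_. a) \<in> L"
  using adm unfolding admissible_space_def by (elim conjE) assumption
lemma adm_c6: "\<forall>S. open S \<longleftrightarrow> openin (topology_generated_by {f -` U | f U. f \<in> L \<and> open U}) S"
  using adm unfolding admissible_space_def by (elim conjE) assumption

lemma adm_const: "(\<lambda>_. a) \<in> L" using adm_c5 by blast
lemma adm_add: "f \<in> L \<Longrightarrow> g \<in> L \<Longrightarrow> (\<lambda>x. f x + g x) \<in> L" using adm_c2 by blast
lemma adm_scale: "f \<in> L \<Longrightarrow> (\<lambda>x. a * f x) \<in> L" using adm_c3 by blast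
lemma adm_max: "f \<in> L \<Longrightarrow> g \<in> L \<Longrightarrow> (\<lambda>x. max (f x) (g x)) \<in> L" using adm_c4 by blast
lemma adm_min: "f \<in> L \<Longrightarrow> g \<in> L \<Longrightarrow> (\<lambda>x. min (f x) (g x)) \<in> L" using adm_c4 by blast
lemma adm_cont: "f \<in> L \<Longrightarrow> continuous_on UNIV f" using adm_c1 by blast
lemma adm_diff: "f \<in> L \<Longrightarrow> g \<in> L \<Longrightarrow> (\<lambda>x. f x - g x) \<in> L"
proof -
  assume "f \<in> L" "g \<in> L"
  then have "(\<lambda>x. f x + (-1) * g x) \<in> L" by (intro adm_add adm_scale)
  then show ?thesis by simp
qed

lemma adm_bump:
  assumes "open S"
  shows "\<forall>x\<in>S. \<exists>\<psi>\<in>L. (\<forall>y. 0 \<le> \<psi> y) \<and> 0 < \<psi> x \<and> (\<forall>y. 0 < \<psi> y \<longrightarrow> y \<in> S)"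
proof -
  have "openin (topology_generated_by {f -` U | f U. f \<in> L \<and> open U}) S"
    by (rule iffD1[OF adm_c6[rule_format] assms])
  then have "generate_topology_on {f -` U | f U. f \<in> L \<and> open U} S"
    by (rule openin_topology_generated_by)
  then show ?thesis
  proof (induction rule: generate_topology_on.induct)
    case Empty then show ?case by simp
  next
    case (Int a b)
    show ?case
    proof
      fix x assume "x \<in> a \<inter> b"
      then obtain p q where p: "p \<in> L" "\<forall>y. 0 \<le> p y" "0 < p x" "\<forall>y. 0 < p y \<longrightarrow> y \<in> a"
        and q: "q \<in> L" "\<forall>y. 0 \<le> q y" "0 < q x" "\<forall>y. 0 < q y \<longrightarrow> y \<in> b"
        using Int.IH by blast
      show "\<exists>\<psi>\<in>L. (\<forall>y. 0 \<le> \<psi> y) \<and> 0 < \<psi> x \<and> (\<forall>y. 0 < \<psi> y \<longrightarrow> y \<in> a \<inter> b)"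
        by (rule bexI[of _ "\<lambda>y. min (p y) (q y)"]) (use p q adm_min in auto)
    qed
  next
    case (UN K)
    show ?case
    proof
      fix x assume "x \<in> \<Union>K"
      then obtain k where k: "k \<in> K" "x \<in> k" by blast
      have "\<forall>x\<in>k. \<exists>\<psi>\<in>L. (\<forall>y. 0 \<le> \<psi> y) \<and> 0 < \<psi> x \<and> (\<forall>y. 0 < \<psi> y \<longrightarrow> y \<in> k)"
        using UN.IH k(1) by simp
      then obtain \<psi> where "\<psi> \<in> L" "\<forall>y. 0 \<le> \<psi> y" "0 < \<psi> x" "\<forall>y. 0 < \<psi> y \<longrightarrow> y \<in> k"
        using k(2) by blast
      moreover have "\<forall>y. 0 < \<psi> y \<longrightarrow> y \<in> \<Union>K" using calculation(4) k(1) by blast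
      ultimately show "\<exists>\<psi>\<in>L. (\<forall>y. 0 \<le> \<psi> y) \<and> 0 < \<psi> x \<and> (\<forall>y. 0 < \<psi> y \<longrightarrow> y \<in> \<Union>K)"
        by blast
    qed
  next
    case (Basis s)
    then obtain f U where s: "s = f -` U" "f \<in> L" "open U" by blast
    show ?case
    proof
      fix x assume "x \<in> s"
      then obtain e where e: "e > 0" "ball (f x) e \<subseteq> U" using s open_contains_ball by blast
      define \<psi> where "\<psi> = (\<lambda>y. max 0 (e - max (f y - f x) (f x - f y)))"
      have "\<psi> \<in> L" unfolding \<psi>_def
        by (intro adm_max adm_diff adm_const s(2))
      moreover have "0 < \<psi> y \<Longrightarrow> y \<in> s" for y
      proof -
        assume "0 < \<psi> y"
        then have "dist (f x) (f y) < e" unfolding \<psi>_def dist_real_def by auto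
        then show ?thesis using e s by auto
      qed
      moreover have "\<forall>y. 0 \<le> \<psi> y" "0 < \<psi> x" unfolding \<psi>_def using e by auto
      ultimately show "\<exists>\<psi>\<in>L. (\<forall>y. 0 \<le> \<psi> y) \<and> 0 < \<psi> x \<and> (\<forall>y. 0 < \<psi> y \<longrightarrow> y \<in> s)"
        by blast
    qed
  qed
qed

lemma adm_countable_bumps:
  assumes sc: "second_countable (euclidean :: 'a topology)" and V: "open V"
  shows "\<exists>\<psi>::nat \<Rightarrow> 'a \<Rightarrow> real. (\<forall>k. \<psi> k \<in> L) \<and> (\<forall>k y. 0 \<le> \<psi> k y) \<and>
           (\<forall>k y. 0 < \<psi> k y \<longrightarrow> y \<in> V) \<and> (\<forall>y\<in>V. \<exists>k. 0 < \<psi> k y)"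
proof -
  obtain \<B> :: "'a set set" where B0: "countable \<B>"
    "\<forall>U x. open U \<and> x \<in> U \<longrightarrow> (\<exists>b\<in>\<B>. x \<in> b \<and> b \<subseteq> U)"
    using sc unfolding second_countable_def by auto
  have B: "countable \<B>" "\<And>U x. open U \<Longrightarrow> x \<in> U \<Longrightarrow> \<exists>b\<in>\<B>. x \<in> b \<and> b \<subseteq> U"
    using B0 by blast+
  define G where "G = {\<psi>\<in>L. (\<forall>y. 0 \<le> \<psi> y) \<and> (\<forall>y. 0 < \<psi> y \<longrightarrow> y \<in> V)}"
  define B' where "B' = {b\<in>\<B>. \<exists>\<psi>\<in>G. b \<subseteq> {y. 0 < \<psi> y}}"
  have cB': "countable B'" by (rule countable_subset[OF _ B(1)]) (auto simp: B'_def)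
  have ex: "\<forall>b\<in>B'. \<exists>\<psi>. \<psi> \<in> G \<and> b \<subseteq> {y. 0 < \<psi> y}" unfolding B'_def by blast
  obtain \<Psi> where Psi0: "\<forall>b\<in>B'. \<Psi> b \<in> G \<and> b \<subseteq> {y. 0 < \<Psi> b y}"
    using bchoice[OF ex] by blast
  have Psi: "\<Psi> b \<in> G \<and> b \<subseteq> {y. 0 < \<Psi> b y}" if "b \<in> B'" for b using Psi0 that by blast
  have cover: "\<exists>b\<in>B'. y \<in> b" if "y \<in> V" for y
  proof -
    have "\<exists>\<psi>\<in>L. (\<forall>y. 0 \<le> \<psi> y) \<and> 0 < \<psi> y \<and> (\<forall>y. 0 < \<psi> y \<longrightarrow> y \<in> V)"
      using adm_bump[OF V] that by (rule bspec)
    then obtain \<psi> where p: "\<psi> \<in> L" "\<forall>y. 0 \<le> \<psi> y" "0 < \<psi> y" "\<forall>y. 0 < \<psi> y \<longrightarrow> y \<in> V"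
      by blast
    have op: "open {y. 0 < \<psi> y}"
      by (rule open_Collect_less[OF continuous_on_const adm_cont[OF p(1)]])
    have yin: "y \<in> {y. 0 < \<psi> y}" using p(3) by simp
    obtain b where b: "b \<in> \<B>" "y \<in> b" "b \<subseteq> {y. 0 < \<psi> y}"
      using B(2)[OF op yin] by blast
    have "\<psi> \<in> G" unfolding G_def using p(1,2,4) by blast
    then have "b \<in> B'" unfolding B'_def using b(1,3) by blast
    then show ?thesis using b(2) by blast
  qed
  show ?thesis
  proof (cases "B' = {}")
    case True
    then have "V = {}" using cover by blast
    show ?thesis by (rule exI[of _ "\<lambda>k y. 0"]) (use \<open>V = {}\<close> adm_const in auto)
  next
    case False
    define \<psi> where "\<psi> k = \<Psi> (from_nat_into B' k)" for k
    have "\<psi> k \<in> G" for k using Psi[OF from_nat_into[OF False]] by (simp add: \<psi>_def)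
    moreover have "\<exists>k. 0 < \<psi> k y" if yV: "y \<in> V" for y
    proof -
      obtain b where "b \<in> B'" "y \<in> b" using cover[OF yV] by blast
      moreover have "from_nat_into B' (to_nat_on B' b) = b"
        by (rule from_nat_into_to_nat_on[OF cB' \<open>b \<in> B'\<close>])
      ultimately have "0 < \<psi> (to_nat_on B' b) y" unfolding \<psi>_def using Psi by auto
      then show ?thesis by blast
    qed
    moreover have G': "\<psi> k \<in> L \<and> (\<forall>y. 0 \<le> \<psi> k y) \<and> (\<forall>y. 0 < \<psi> k y \<longrightarrow> y \<in> V)" for k
      using calculation(1)[of k] unfolding G_def by blast
    ultimately show ?thesis by (intro exI[of _ \<psi>]) blast
  qed
qed

end

fun PP :: "(nat \<Rightarrow> 'a \<Rightarrow> real) \<Rightarrow> nat \<Rightarrow> nat \<Rightarrow> 'a \<Rightarrow> real" where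
  "PP \<psi> 0 n y = min 1 (real n * \<psi> 0 y)"
| "PP \<psi> (Suc m) n y = max (PP \<psi> m n y) (min 1 (real n * \<psi> (Suc m) y))"

lemma PP_L: assumes "admissible_space L" "\<forall>k. \<psi> k \<in> L" shows "(\<lambda>y. PP \<psi> m n y) \<in> L"
proof (induction m)
  case 0
  have "(\<lambda>y. min 1 (real n * \<psi> 0 y)) \<in> L" using assms by (auto intro!: adm_min adm_scale adm_const)
  then show ?case by simp
next
  case (Suc m)
  have "(\<lambda>y. max (PP \<psi> m n y) (min 1 (real n * \<psi> (Suc m) y))) \<in> L"
    using assms Suc by (auto intro!: adm_max adm_min adm_scale adm_const)
  then show ?case by simp
qed

lemma PP_bounds: "(\<forall>k y. 0 \<le> \<psi> k y) \<Longrightarrow> 0 \<le> PP \<psi> m n y \<and> PP \<psi> m n y \<le> 1"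
  by (induction m) auto

lemma PP_mono_n: "(\<forall>k y. 0 \<le> \<psi> k y) \<Longrightarrow> PP \<psi> m n y \<le> PP \<psi> m (Suc n) y"
proof (induction m)
  case 0
  have "real n * \<psi> 0 y \<le> real (Suc n) * \<psi> 0 y" using 0 by (intro mult_right_mono) auto
  then show ?case by auto
next
  case (Suc m)
  have "real n * \<psi> (Suc m) y \<le> real (Suc n) * \<psi> (Suc m) y" using Suc.prems by (intro mult_right_mono) auto
  then show ?case using Suc by auto
qed

lemma PP_ge: "k \<le> m \<Longrightarrow> min 1 (real n * \<psi> k y) \<le> PP \<psi> m n y"
proof (induction m)
  case 0 then show ?case by auto
next
  case (Suc m) then show ?case by (cases "k = Suc m") auto
qed

lemma PP_zero: "(\<forall>k. \<psi> k y = 0) \<Longrightarrow> PP \<psi> m n y = 0"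
  by (induction m) auto

lemma approx_open:
  fixes L :: "('a::topological_space \<Rightarrow> real) set"
  assumes adm: "admissible_space L" and sc: "second_countable (euclidean :: 'a topology)"
    and V: "open V"
  shows "\<exists>h. (\<forall>n. h n \<in> L) \<and> (\<forall>n y. 0 \<le> h n y \<and> h n y \<le> indicator V y) \<and>
    (\<forall>n y. h n y \<le> h (Suc n) y) \<and> (\<forall>y. (\<lambda>n. h n y) \<longlonglongrightarrow> indicator V y)"
proof -
  obtain \<psi> :: "nat \<Rightarrow> 'a \<Rightarrow> real" where p: "\<forall>k. \<psi> k \<in> L" "\<forall>k y. 0 \<le> \<psi> k y"
    "\<forall>k y. 0 < \<psi> k y \<longrightarrow> y \<in> V" "\<forall>y\<in>V. \<exists>k. 0 < \<psi> k y"
    using adm_countable_bumps[OF adm sc V] by blast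
  define h where "h n = (\<lambda>y. PP \<psi> n n y)" for n
  have out: "h n y = 0" if "y \<notin> V" for n y
  proof -
    have "\<forall>k. \<psi> k y = 0"
    proof
      fix k show "\<psi> k y = 0" using p(2,3) that by (metis antisym not_less)
    qed
    then show ?thesis unfolding h_def by (rule PP_zero)
  qed
  have "\<forall>n. h n \<in> L" unfolding h_def using PP_L[OF adm p(1)] by blast
  moreover have "\<forall>n y. 0 \<le> h n y \<and> h n y \<le> indicator V y"
    using PP_bounds[OF p(2)] out unfolding h_def by (auto simp: indicator_def)
  moreover have "\<forall>n y. h n y \<le> h (Suc n) y"
  proof (intro allI)
    fix n y
    have "PP \<psi> n n y \<le> PP \<psi> n (Suc n) y" using PP_mono_n[OF p(2)] .
    also have "\<dots> \<le> PP \<psi> (Suc n) (Suc n) y" by simp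
    finally show "h n y \<le> h (Suc n) y" unfolding h_def .
  qed
  moreover have "(\<lambda>n. h n y) \<longlonglongrightarrow> indicator V y" for y
  proof (cases "y \<in> V")
    case False then show ?thesis using out by simp
  next
    case True
    then obtain k where k: "0 < \<psi> k y" using p(4) by blast
    obtain N where N: "inverse (\<psi> k y) < real N" using reals_Archimedean2 by blast
    have "h n y = 1" if "n \<ge> max k N" for n
    proof -
      have "1 < real N * \<psi> k y" using N k by (simp add: field_simps)
      also have "\<dots> \<le> real n * \<psi> k y" using that k by (intro mult_right_mono) auto
      finally have "min 1 (real n * \<psi> k y) = 1" by simp
      then have "1 \<le> h n y" unfolding h_def using PP_ge[of k n n \<psi> y] that by simp
      then show ?thesis unfolding h_def using PP_bounds[OF p(2)] by (meson antisym)
    qed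
    then have "eventually (\<lambda>n. h n y = indicator V y) sequentially"
      using True unfolding eventually_sequentially by (metis indicator_simps(1) max.bounded_iff)
    then show ?thesis by (rule tendsto_eventually)
  qed
  ultimately show ?thesis by blast
qed


context
  fixes L :: "('a::topological_space \<Rightarrow> real) set" and c
  assumes cap: "capacity L c"
begin

lemma cap_sub: "f \<in> L \<Longrightarrow> g \<in> L \<Longrightarrow> c (\<lambda>x. f x + g x) \<le> c f + c g"
  using cap unfolding capacity_def by blast
lemma cap_scale: "f \<in> L \<Longrightarrow> c (\<lambda>x. a * f x) = \<bar>a\<bar> * c f"
  using cap unfolding capacity_def by blast
lemma cap_mono: "f \<in> L \<Longrightarrow> g \<in> L \<Longrightarrow> (\<And>x. \<bar>f x\<bar> \<le> \<bar>g x\<bar>) \<Longrightarrow> c f \<le> c g"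
  using cap unfolding capacity_def by blast
lemma cap_nonneg: assumes adm: "admissible_space L" and f: "f \<in> L" shows "0 \<le> c f"
proof -
  have z: "(\<lambda>x. 0 * f x) \<in> L" using adm_scale[OF adm f] .
  have "c (\<lambda>x. 0 * f x) \<le> c f" by (rule cap_mono[OF z f]) simp
  then show ?thesis using cap_scale[OF f, of 0] by simp
qed

lemma cap_dini:
  assumes adm: "admissible_space L" and F: "\<forall>n. F n \<in> L" "\<forall>n x. F (Suc n) x \<le> F n x"
    "\<forall>x. (\<lambda>n. F n x) \<longlonglongrightarrow> 0" and e: "e > 0"
  shows "\<exists>n. c (F n) < e"
proof -
  have "(INF n. c (F n)) = 0" using cap F unfolding capacity_def by blast
  then have "(INF n. c (F n)) < e" using e by simp
  moreover have "bdd_below (range (\<lambda>n. c (F n)))"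
    by (rule bdd_belowI[where m=0]) (use cap_nonneg[OF adm] F(1) in auto)
  ultimately show ?thesis using cINF_less_iff[of UNIV "\<lambda>n. c (F n)" e] by auto
qed

lemma cl_mono: "(\<And>x. f x \<le> g x) \<Longrightarrow> cap_lsc L c f \<le> cap_lsc L c g"
  unfolding cap_lsc_def by (rule SUP_subset_mono) (auto intro: order_trans)

lemma cl_ge: "\<phi> \<in> L \<Longrightarrow> (\<And>x. 0 \<le> \<phi> x \<and> \<phi> x \<le> f x) \<Longrightarrow> ereal (c \<phi>) \<le> cap_lsc L c f"
  unfolding cap_lsc_def by (rule SUP_upper) auto

lemma cl_L: assumes "\<phi> \<in> L" "\<And>x. 0 \<le> \<phi> x" shows "cap_lsc L c \<phi> = ereal (c \<phi>)"
proof (rule antisym)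
  show "cap_lsc L c \<phi> \<le> ereal (c \<phi>)" unfolding cap_lsc_def
    by (rule SUP_least) (use assms in \<open>auto intro!: cap_mono\<close>)
  show "ereal (c \<phi>) \<le> cap_lsc L c \<phi>" using assms by (intro cl_ge) auto
qed

lemma ce_lsc: assumes "lsc f" "\<And>x. 0 \<le> f x" shows "cap_ext L c f = cap_lsc L c f"
proof (rule antisym)
  show "cap_ext L c f \<le> cap_lsc L c f" unfolding cap_ext_def
    by (rule INF_lower) (use assms in auto)
  show "cap_lsc L c f \<le> cap_ext L c f" unfolding cap_ext_def
    by (rule INF_greatest) (auto intro!: cl_mono intro: order_trans[OF abs_ge_self])
qed

end

lemma lsc_cont: "continuous_on UNIV f \<Longrightarrow> lsc f"
  unfolding lsc_def using open_Collect_less[OF continuous_on_const] by blast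

lemma lsc_ind: assumes "open V" shows "lsc (indicator V :: 'a::topological_space \<Rightarrow> real)"
  unfolding lsc_def
proof
  fix a :: real
  have "{x. a < (indicator V x::real)} = (if a < 0 then UNIV else if a < 1 then V else {})"
    by (auto simp: indicator_def)
  then show "open {x. a < (indicator V x::real)}" using assms by simp
qed


theorem proposition2p2:
  fixes L :: "('a::topological_space \<Rightarrow> real) set"
    and c :: "('a \<Rightarrow> real) \<Rightarrow> real"
  assumes "metrizable_space (euclidean :: 'a topology)"
    and "separable_space (euclidean :: 'a topology)"
    and "admissible_space L"
    and "capacity L c"
  shows "(\<forall>V::'a set. open V \<longrightarrow>
            (\<exists>h::nat \<Rightarrow> 'a \<Rightarrow> real.
               (\<forall>n. continuous_on UNIV (h n)) \<and> (\<forall>n x. 0 \<le> h n x) \<and>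
               (\<forall>n x. h n x \<le> h (Suc n) x) \<and>
               (\<forall>x. (\<lambda>n. h n x) \<longlonglongrightarrow> indicator V x) \<and>
               (\<lambda>n. cap_ext L c (h n)) \<longlonglongrightarrow> cap_ext L c (indicator V)))
       \<and> (\<forall>F::'a set. closed F \<longrightarrow>
            (\<exists>g::nat \<Rightarrow> 'a \<Rightarrow> real.
               (\<forall>n. continuous_on UNIV (g n)) \<and> (\<forall>n x. g n x \<le> 1) \<and>
               (\<forall>n x. g (Suc n) x \<le> g n x) \<and>
               (\<forall>x. (\<lambda>n. g n x) \<longlonglongrightarrow> indicator F x) \<and>
               (\<lambda>n. cap_ext L c (g n)) \<longlonglongrightarrow> cap_ext L c (indicator F)))"
proof -
  have sc: "second_countable (euclidean::'a topology)" using sep_metr_sc assms(1,2) .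
  note adm = assms(3) and cap = assms(4)
  have ceL: "cap_ext L c \<phi> = ereal (c \<phi>)" if "\<phi> \<in> L" "\<And>x. 0 \<le> \<phi> x" for \<phi>
  proof -
    have "cap_ext L c \<phi> = cap_lsc L c \<phi>"
      by (rule ce_lsc[OF cap lsc_cont[OF adm_cont[OF adm]]]) (use that in auto)
    also have "\<dots> = ereal (c \<phi>)" by (rule cl_L[OF cap]) (use that in auto)
    finally show ?thesis .
  qed
  have part1: "\<forall>V::'a set. open V \<longrightarrow>
            (\<exists>h::nat \<Rightarrow> 'a \<Rightarrow> real.
               (\<forall>n. continuous_on UNIV (h n)) \<and> (\<forall>n x. 0 \<le> h n x) \<and>
               (\<forall>n x. h n x \<le> h (Suc n) x) \<and>
               (\<forall>x. (\<lambda>n. h n x) \<longlonglongrightarrow> indicator V x) \<and>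
               (\<lambda>n. cap_ext L c (h n)) \<longlonglongrightarrow> cap_ext L c (indicator V))"
  proof (intro allI impI)
    fix V :: "'a set" assume V: "open V"
    obtain h where h: "\<forall>n. h n \<in> L" "\<forall>n y. 0 \<le> h n y \<and> h n y \<le> indicator V y"
      "\<forall>n y. h n y \<le> h (Suc n) y" "\<forall>y. (\<lambda>n. h n y) \<longlonglongrightarrow> indicator V y"
      using approx_open[OF adm sc V] by blast
    have ce_h: "cap_ext L c (h n) = ereal (c (h n))" for n using ceL h by auto
    have ce_V: "cap_ext L c (indicator V) = cap_lsc L c (indicator V)"
      by (rule ce_lsc[OF cap lsc_ind[OF V]]) auto
    have inc: "incseq (\<lambda>n. ereal (c (h n)))"
    proof (rule incseq_SucI)
      fix n
      have "c (h n) \<le> c (h (Suc n))"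
        by (rule cap_mono[OF cap]) (use h in \<open>auto simp: abs_of_nonneg\<close>)
      then show "ereal (c (h n)) \<le> ereal (c (h (Suc n)))" by simp
    qed
    have "(SUP n. ereal (c (h n))) = cap_lsc L c (indicator V)"
    proof (rule antisym)
      show "(SUP n. ereal (c (h n))) \<le> cap_lsc L c (indicator V)"
        by (rule SUP_least, rule cl_ge[OF cap]) (use h in auto)
      show "cap_lsc L c (indicator V) \<le> (SUP n. ereal (c (h n)))" unfolding cap_lsc_def
      proof (rule SUP_least)
        fix \<phi> assume "\<phi> \<in> {\<phi>\<in>L. \<forall>x. 0 \<le> \<phi> x \<and> \<phi> x \<le> indicator V x}"
        then have \<phi>: "\<phi> \<in> L" "\<forall>x. 0 \<le> \<phi> x" "\<forall>x. \<phi> x \<le> indicator V x" by auto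
        define D where "D n = (\<lambda>y. \<phi> y - min (\<phi> y) (h n y))" for n
        have DL: "\<forall>n. D n \<in> L" unfolding D_def using \<phi> h
          by (auto intro!: adm_diff[OF adm] adm_min[OF adm])
        have Ddec: "\<forall>n x. D (Suc n) x \<le> D n x" unfolding D_def
          by (intro allI diff_left_mono min.mono) (use h(3) in auto)
        have Dlim: "\<forall>x. (\<lambda>n. D n x) \<longlonglongrightarrow> 0"
        proof
          fix x
          have "(\<lambda>n. D n x) \<longlonglongrightarrow> \<phi> x - min (\<phi> x) (indicator V x)"
            unfolding D_def by (intro tendsto_intros h(4)[rule_format])
          moreover have "min (\<phi> x) (indicator V x) = \<phi> x" using \<phi>(3) by (simp add: min_def)
          ultimately show "(\<lambda>n. D n x) \<longlonglongrightarrow> 0" by simp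
        qed
        show "ereal (c \<phi>) \<le> (SUP n. ereal (c (h n)))"
        proof (rule ereal_le_epsilon2)
          fix e :: real assume e: "0 < e"
          obtain n where n: "c (D n) < e" using cap_dini[OF cap adm DL Ddec Dlim e] by blast
          have mL: "(\<lambda>y. min (\<phi> y) (h n y)) \<in> L" using \<phi> h adm_min[OF adm] by auto
          have "c \<phi> = c (\<lambda>y. min (\<phi> y) (h n y) + D n y)" unfolding D_def by simp
          also have "\<dots> \<le> c (\<lambda>y. min (\<phi> y) (h n y)) + c (D n)"
            by (rule cap_sub[OF cap mL]) (use DL in auto)
          finally have 1: "c \<phi> \<le> c (\<lambda>y. min (\<phi> y) (h n y)) + c (D n)" .
          have 2: "c (\<lambda>y. min (\<phi> y) (h n y)) \<le> c (h n)"
            by (rule cap_mono[OF cap mL]) (use \<phi> h in \<open>auto simp: abs_of_nonneg\<close>)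
          have "c \<phi> \<le> c (h n) + e" using 1 2 n by linarith
          then have "ereal (c \<phi>) \<le> ereal (c (h n)) + ereal e" by simp
          also have "\<dots> \<le> (SUP n. ereal (c (h n))) + ereal e"
            by (intro add_right_mono SUP_upper) auto
          finally show "ereal (c \<phi>) \<le> (SUP n. ereal (c (h n))) + ereal e" .
        qed
      qed
    qed
    then have "(\<lambda>n. cap_ext L c (h n)) \<longlonglongrightarrow> cap_ext L c (indicator V)"
      using LIMSEQ_SUP[OF inc] ce_h ce_V by simp
    then show "\<exists>h::nat \<Rightarrow> 'a \<Rightarrow> real.
               (\<forall>n. continuous_on UNIV (h n)) \<and> (\<forall>n x. 0 \<le> h n x) \<and>
               (\<forall>n x. h n x \<le> h (Suc n) x) \<and>
               (\<forall>x. (\<lambda>n. h n x) \<longlonglongrightarrow> indicator V x) \<and>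
               (\<lambda>n. cap_ext L c (h n)) \<longlonglongrightarrow> cap_ext L c (indicator V)"
      using h adm_cont[OF adm] by (intro exI[of _ h]) auto
  qed
  have part2: "\<forall>F::'a set. closed F \<longrightarrow>
            (\<exists>g::nat \<Rightarrow> 'a \<Rightarrow> real.
               (\<forall>n. continuous_on UNIV (g n)) \<and> (\<forall>n x. g n x \<le> 1) \<and>
               (\<forall>n x. g (Suc n) x \<le> g n x) \<and>
               (\<forall>x. (\<lambda>n. g n x) \<longlonglongrightarrow> indicator F x) \<and>
               (\<lambda>n. cap_ext L c (g n)) \<longlonglongrightarrow> cap_ext L c (indicator F))"
  proof (intro allI impI)
    fix F :: "'a set" assume F: "closed F"
    have V: "open (- F)" using F by auto
    obtain h where h: "\<forall>n. h n \<in> L" "\<forall>n y. 0 \<le> h n y \<and> h n y \<le> indicator (- F) y"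
      "\<forall>n y. h n y \<le> h (Suc n) y" "\<forall>y. (\<lambda>n. h n y) \<longlonglongrightarrow> indicator (- F) y"
      using approx_open[OF adm sc V] by blast
    define g where "g n = (\<lambda>y. 1 - h n y)" for n
    have gL: "\<forall>n. g n \<in> L" unfolding g_def using h adm_diff[OF adm] adm_const[OF adm] by auto
    have gb: "\<forall>n y. 0 \<le> g n y \<and> g n y \<le> 1"
    proof (intro allI)
      fix n y
      have "h n y \<le> 1" using h(2) by (metis indicator_le_1 order_trans)
      then show "0 \<le> g n y \<and> g n y \<le> 1" using h(2) unfolding g_def by auto
    qed
    have gdec: "\<forall>n y. g (Suc n) y \<le> g n y" unfolding g_def using h(3) by auto
    have glim: "\<forall>y. (\<lambda>n. g n y) \<longlonglongrightarrow> indicator F y"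
    proof
      fix y
      have "(\<lambda>n. g n y) \<longlonglongrightarrow> 1 - indicator (- F) y"
        unfolding g_def by (intro tendsto_intros h(4)[rule_format])
      then show "(\<lambda>n. g n y) \<longlonglongrightarrow> indicator F y" by (cases "y \<in> F") auto
    qed
    have gind: "\<forall>n x. indicator F x \<le> g n x"
    proof (intro allI)
      fix n x show "indicator F x \<le> g n x"
      proof (cases "x \<in> F")
        case True
        then have "h n x \<le> 0" using h(2) by (metis ComplD indicator_simps(2))
        then show ?thesis using True unfolding g_def by simp
      next
        case False then show ?thesis using gb by simp
      qed
    qed
    have ce_g: "cap_ext L c (g n) = ereal (c (g n))" for n using ceL gL gb by auto
    have dec: "decseq (\<lambda>n. ereal (c (g n)))"
    proof (rule decseq_SucI)
      fix n
      have "c (g (Suc n)) \<le> c (g n)"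
        by (rule cap_mono[OF cap]) (use gL gb gdec in \<open>auto simp: abs_of_nonneg\<close>)
      then show "ereal (c (g (Suc n))) \<le> ereal (c (g n))" by simp
    qed
    have "(INF n. ereal (c (g n))) = cap_ext L c (indicator F)"
    proof (rule antisym)
      show "cap_ext L c (indicator F) \<le> (INF n. ereal (c (g n)))"
      proof (rule INF_greatest)
        fix n
        have "cap_ext L c (indicator F) \<le> cap_ext L c (g n)" unfolding cap_ext_def
        proof (rule INF_superset_mono)
          show "{f. lsc f \<and> (\<forall>x. 0 \<le> f x) \<and> (\<forall>x. \<bar>g n x\<bar> \<le> f x)}
             \<subseteq> {f. lsc f \<and> (\<forall>x. 0 \<le> f x) \<and> (\<forall>x. \<bar>indicator F x :: real\<bar> \<le> f x)}"
            using gind gb by (auto simp: abs_of_nonneg) (meson order_trans)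
        qed simp
        then show "cap_ext L c (indicator F) \<le> ereal (c (g n))" using ce_g by simp
      qed
      show "(INF n. ereal (c (g n))) \<le> cap_ext L c (indicator F)" unfolding cap_ext_def
      proof (rule INF_greatest)
        fix f assume "f \<in> {f. lsc f \<and> (\<forall>x. 0 \<le> f x) \<and> (\<forall>x. \<bar>indicator F x :: real\<bar> \<le> f x)}"
        then have f: "lsc f" "\<forall>x. 0 \<le> f x" "\<forall>x. indicator F x \<le> f x" by auto
        show "(INF n. ereal (c (g n))) \<le> cap_lsc L c f"
        proof (cases "cap_lsc L c f = \<infinity>")
          case True then show ?thesis by simp
        next
          case False
          have "ereal (c (\<lambda>_. 0)) \<le> cap_lsc L c f"
            by (rule cl_ge[OF cap]) (use f adm_const[OF adm] in auto)
          moreover have "0 \<le> c (\<lambda>_. 0)" using cap_nonneg[OF cap adm adm_const[OF adm]] .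
          ultimately have c0: "0 \<le> cap_lsc L c f" by (meson ereal_less_eq(5) order_trans)
          then obtain r where r: "cap_lsc L c f = ereal r" using False by (cases "cap_lsc L c f") auto
          have r0: "0 \<le> r" using c0 r by simp
          show ?thesis
          proof (rule ereal_le_epsilon2)
            fix e0 :: real assume e0: "0 < e0"
            define e where "e = e0 / 2"
            have e: "0 < e" using e0 unfolding e_def by simp
            define \<delta> where "\<delta> = e / (r + e + 1)"
            have \<delta>: "0 < \<delta>" "\<delta> < 1" unfolding \<delta>_def using e r0 by (auto simp: field_simps)
            have key: "r \<le> (1 - \<delta>) * (r + e)" unfolding \<delta>_def using e r0
              by (simp add: field_simps)
            define W where "W = {x. 1 - \<delta> < f x}"
            have W: "open W" using f(1) unfolding lsc_def W_def by blast
            have FW: "F \<subseteq> W"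
            proof
              fix x assume "x \<in> F"
              then have "1 \<le> f x" using f(3) by (metis indicator_simps(1))
              then show "x \<in> W" unfolding W_def using \<delta> by simp
            qed
            obtain k where k: "\<forall>n. k n \<in> L" "\<forall>n y. 0 \<le> k n y \<and> k n y \<le> indicator W y"
              "\<forall>n y. k n y \<le> k (Suc n) y" "\<forall>y. (\<lambda>n. k n y) \<longlonglongrightarrow> indicator W y"
              using approx_open[OF adm sc W] by blast
            have kf: "c (k n) \<le> r + e" for n
            proof -
              have bnd: "0 \<le> (1 - \<delta>) * k n y \<and> (1 - \<delta>) * k n y \<le> f y" for y
              proof (cases "y \<in> W")
                case True
                have "(1 - \<delta>) * k n y \<le> (1 - \<delta>) * 1"
                  using k(2) \<delta> True by (intro mult_left_mono) (auto, metis indicator_simps(1))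
                then have "(1 - \<delta>) * k n y \<le> 1 - \<delta>" by simp
                moreover have "1 - \<delta> < f y" using True unfolding W_def by simp
                moreover have "0 \<le> k n y" using k(2) by blast
                ultimately have "(1 - \<delta>) * k n y \<le> f y" by linarith
                moreover have "0 \<le> (1 - \<delta>) * k n y" using \<open>0 \<le> k n y\<close> \<delta> by simp
                ultimately show ?thesis by blast
              next
                case False
                then have "k n y = 0" using k(2) by (metis antisym indicator_simps(2))
                then show ?thesis using f(2) by simp
              qed
              have "ereal (c (\<lambda>y. (1 - \<delta>) * k n y)) \<le> cap_lsc L c f"
                by (rule cl_ge[OF cap]) (use bnd adm_scale[OF adm] k(1) in auto)
              then have "(1 - \<delta>) * c (k n) \<le> r" using cap_scale[OF cap k(1)[rule_format, of n], where a="1 - \<delta>"] r \<delta>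
                by simp
              then have "(1 - \<delta>) * c (k n) \<le> (1 - \<delta>) * (r + e)" using key by linarith
              then show ?thesis by (rule mult_left_le_imp_le) (use \<delta> in simp)
            qed
            define D where "D n = (\<lambda>y. max (g n y - k n y) 0)" for n
            have DL: "\<forall>n. D n \<in> L" unfolding D_def using gL k(1)
              by (auto intro!: adm_diff[OF adm] adm_max[OF adm] adm_const[OF adm])
            have Ddec: "\<forall>n x. D (Suc n) x \<le> D n x"
            proof (intro allI)
              fix n x
              have "g (Suc n) x - k (Suc n) x \<le> g n x - k n x"
                using gdec k(3) by (meson diff_mono)
              then show "D (Suc n) x \<le> D n x" unfolding D_def by (simp add: max_def)
            qed
            have Dlim: "\<forall>x. (\<lambda>n. D n x) \<longlonglongrightarrow> 0"
            proof
              fix x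
              have "(\<lambda>n. D n x) \<longlonglongrightarrow> max (indicator F x - indicator W x) 0"
                unfolding D_def by (intro tendsto_intros glim[rule_format] k(4)[rule_format])
              moreover have "max (indicator F x - indicator W x) 0 = (0::real)"
                using FW by (auto simp: indicator_def)
              ultimately show "(\<lambda>n. D n x) \<longlonglongrightarrow> 0" by simp
            qed
            obtain n where n: "c (D n) < e" using cap_dini[OF cap adm DL Ddec Dlim e] by blast
            have mono_pt: "\<bar>g n y\<bar> \<le> \<bar>k n y + D n y\<bar>" for y
              using gb[rule_format, of n y] k(2)[rule_format, of n y] unfolding D_def by (smt (verit))
            have "c (g n) \<le> c (\<lambda>y. k n y + D n y)"
              by (rule cap_mono[OF cap gL[rule_format] adm_add[OF adm k(1)[rule_format] DL[rule_format]] mono_pt])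
            also have "\<dots> \<le> c (k n) + c (D n)" using cap_sub[OF cap] k(1) DL by blast
            finally have "c (g n) \<le> r + e0" using kf[of n] n unfolding e_def by linarith
            moreover have "(INF n. ereal (c (g n))) \<le> ereal (c (g n))" by (rule INF_lower) simp
            ultimately have "(INF n. ereal (c (g n))) \<le> ereal (r + e0)"
              using order_trans by fastforce
            then show "(INF n. ereal (c (g n))) \<le> cap_lsc L c f + ereal e0" using r by simp
          qed
        qed
      qed
    qed
    then have "(\<lambda>n. cap_ext L c (g n)) \<longlonglongrightarrow> cap_ext L c (indicator F)"
      using LIMSEQ_INF[OF dec] ce_g by simp
    then show "\<exists>g::nat \<Rightarrow> 'a \<Rightarrow> real.
               (\<forall>n. continuous_on UNIV (g n)) \<and> (\<forall>n x. g n x \<le> 1) \<and>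
               (\<forall>n x. g (Suc n) x \<le> g n x) \<and>
               (\<forall>x. (\<lambda>n. g n x) \<longlonglongrightarrow> indicator F x) \<and>
               (\<lambda>n. cap_ext L c (g n)) \<longlonglongrightarrow> cap_ext L c (indicator F)"
      using gL gb gdec glim adm_cont[OF adm] by (intro exI[of _ g]) auto
  qed
  show ?thesis using part1 part2 by blast
qed

end
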